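(* Let $\kappa$ be a regular cardinal with $\kappa\ge\aleph_2$. If there is a $(\kappa\times\omega_1)$-Prikry matrix, then $\binom{\kappa}{\aleph_1}\nrightarrow\binom{\aleph_0}{\aleph_1}_2$.
   Context: Work in ZFC. For a regular $\kappa\ge\aleph_2$, a $(\kappa\times\omega_1)$-Prikry matrix is a family $(A_{\alpha,\eta}:\alpha\in\kappa,\eta\in\omega_1)$ of subsets of $\omega_1$ such that: (i) for every $\alpha\in\kappa$ and $\zeta<\eta<\omega_1$, $A_{\alpha,\zeta}\cap A_{\alpha,\eta}=\varnothing$; (ii) for every $\alpha\in\kappa$, $\bigcup_{\eta\in\omega_1}A_{\alpha,\eta}=\omega_1$; (iii) for every sequence of pairwise distinct $\alpha_n\in\kappa$ ($n\in\omega$) and every sequence $(\eta_n:n\in\omega)$ of elements of $\omega_1$ (repetitions allowed), $|\omega_1\setminus\bigcup_{n\in\omega}A_{\alpha_n,\eta_n}|\le\aleph_0$. The relation $\binom{\lambda}{\kappa}\rightarrow\binom{\alpha}{\beta}_\chi$ means: for every $c:\lambda\times\kappa\rightarrow\chi$ there are $A\subseteq\lambda$, $B\subseteq\kappa$ with ${\rm otp}(A)=\alpha$, ${\rm otp}(B)=\beta$ and $c\upharpoonright(A\times B)$ constant; $\nrightarrow$ is its negation. *)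

theory Defs
  imports Main "HOL-Library.Countable_Set"
begin

text \<open>Cardinals/ordinals are represented by well-orders (HOL's BNF cardinal library).
  The regular cardinal kappa is a card order r with Field r as its underlying set;
  omega_1 is a well-order w order-isomorphic to cardSuc natLeq.\<close>

definition prikry_matrix :: "'k rel \<Rightarrow> 'w rel \<Rightarrow> ('k \<Rightarrow> 'w \<Rightarrow> 'w set) \<Rightarrow> bool" where
  "prikry_matrix r w A \<longleftrightarrow>
     (\<forall>\<alpha>\<in>Field r. \<forall>\<eta>\<in>Field w. A \<alpha> \<eta> \<subseteq> Field w) \<and>
     (\<forall>\<alpha>\<in>Field r. \<forall>\<zeta>\<in>Field w. \<forall>\<eta>\<in>Field w. \<zeta> \<noteq> \<eta> \<longrightarrow> A \<alpha> \<zeta> \<inter> A \<alpha> \<eta> = {}) \<and>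
     (\<forall>\<alpha>\<in>Field r. (\<Union>\<eta>\<in>Field w. A \<alpha> \<eta>) = Field w) \<and>
     (\<forall>(a::nat \<Rightarrow> 'k) (e::nat \<Rightarrow> 'w).
        inj a \<longrightarrow> range a \<subseteq> Field r \<longrightarrow> range e \<subseteq> Field w \<longrightarrow>
        countable (Field w - (\<Union>n. A (a n) (e n))))"

text \<open>The partition relation (lambda over kappa) -> (alpha over beta)_chi, with lambda, kappa, alpha,
  beta given as well-orders and chi colours given as a set of colours.\<close>
definition polarized_arrow ::
  "'a rel \<Rightarrow> 'b rel \<Rightarrow> 'c rel \<Rightarrow> 'd rel \<Rightarrow> 'e set \<Rightarrow> bool" where
  "polarized_arrow l k al be C \<longleftrightarrow>
     (\<forall>c. (\<forall>x\<in>Field l. \<forall>y\<in>Field k. c x y \<in> C) \<longrightarrow>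
        (\<exists>X Y i. X \<subseteq> Field l \<and> Y \<subseteq> Field k \<and>
           ordIso2 (Restr l X) al \<and> ordIso2 (Restr k Y) be \<and>
           (\<forall>x\<in>X. \<forall>y\<in>Y. c x y = i)))"

end

theory Submission
  imports Defs
begin

unbundle cardinal_syntax

lemma unc_aux:
  assumes "w =o cardSuc natLeq" and "Restr w Y =o w"
  shows "\<not> countable Y"
proof
  assume "countable Y"
  then obtain f :: "_ \<Rightarrow> nat" where "inj_on f Y" by (auto simp: countable_def)
  hence 1: "|Y| \<le>o |UNIV :: nat set|" using card_of_ordLeq[of Y "UNIV::nat set"] by blast
  have 2: "|Field (Restr w Y)| \<le>o |Y|" by (rule card_of_mono1) (auto simp: Field_def)
  have 3: "|Field (Restr w Y)| =o |Field w|" using assms(2) card_of_cong by blast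
  have 4: "|Field w| =o |Field (cardSuc natLeq)|" using assms(1) card_of_cong by blast
  have 5: "|Field (cardSuc natLeq)| =o cardSuc natLeq"
    using card_of_Field_ordIso cardSuc_Card_order natLeq_Card_order by blast
  have "cardSuc natLeq \<le>o natLeq"
  proof -
    have "cardSuc natLeq \<le>o |Field (cardSuc natLeq)|" using 5 ordIso_iff_ordLeq by blast
    also have "|Field (cardSuc natLeq)| \<le>o |Field w|" using 4 ordIso_iff_ordLeq by blast
    also have "|Field w| \<le>o |Field (Restr w Y)|" using 3 ordIso_iff_ordLeq by blast
    also note 2
    also note 1
    also have "|UNIV :: nat set| \<le>o natLeq" using card_of_nat ordIso_iff_ordLeq by blast
    finally show ?thesis .
  qed
  thus False using cardSuc_greater[OF natLeq_Card_order] not_ordLess_ordLeq by blast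
qed

lemma inf_aux:
  assumes "Restr r X =o natLeq"
  shows "infinite X"
proof
  assume "finite X"
  hence "finite (Field (Restr r X))" using finite_subset[OF Field_Restr_subset] by blast
  moreover have "|Field (Restr r X)| =o |Field natLeq|" using assms card_of_cong by blast
  ultimately have "finite (UNIV :: nat set)" using card_of_ordIso_finite Field_natLeq by metis
  thus False by simp
qed

theorem claim2p3:
  fixes r :: "'k rel" and w :: "'w rel" and A :: "'k \<Rightarrow> 'w \<Rightarrow> 'w set"
  assumes "Card_order r" and "regularCard r"
    and "ordLeq2 (cardSuc (cardSuc natLeq)) r"
    and "Well_order w" and "ordIso2 w (cardSuc natLeq)"
    and "prikry_matrix r w A"
  shows "\<not> polarized_arrow r w natLeq w (UNIV :: bool set)"
proof
  assume PA: "polarized_arrow r w natLeq w (UNIV :: bool set)"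
  have "w =o w" using assms(4) ordIso_reflexive by blast
  hence "\<not> countable (Field w)" using unc_aux[OF assms(5)] Restr_Field by metis
  hence inf: "infinite (Field w)" using countable_finite by blast
  then obtain e0 where e0: "e0 \<in> Field w" by (metis ex_in_conv finite.emptyI)
  have "infinite (Field w - {e0})" using inf by simp
  then obtain e1 where e1: "e1 \<in> Field w - {e0}" by (metis ex_in_conv finite.emptyI)
  have e: "e0 \<in> Field w" "e1 \<in> Field w" "e0 \<noteq> e1" using e0 e1 by auto
  define c where "c = (\<lambda>x y. y \<in> A x e0)"
  obtain X Y i where XY: "X \<subseteq> Field r" "Y \<subseteq> Field w" "Restr r X =o natLeq"
     "Restr w Y =o w" "\<forall>x\<in>X. \<forall>y\<in>Y. c x y = i"
    using PA[unfolded polarized_arrow_def, rule_format, of c] by auto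
  have Yu: "\<not> countable Y" using unc_aux[OF assms(5) XY(4)] .
  obtain a :: "nat \<Rightarrow> 'k" where a: "inj a" "range a \<subseteq> X"
    using infinite_iff_countable_subset[THEN iffD1, OF inf_aux[OF XY(3)]] by (elim exE conjE)
  have M: "\<And>e. e \<in> Field w \<Longrightarrow> countable (Field w - (\<Union>n. A (a n) e))"
    using assms(6) a XY(1) unfolding prikry_matrix_def by auto
  show False
  proof (cases i)
    case True
    have "Y \<subseteq> Field w - (\<Union>n. A (a n) e1)"
    proof
      fix y assume y: "y \<in> Y"
      { fix n assume "y \<in> A (a n) e1"
        moreover have "y \<in> A (a n) e0" using XY(5) a y True c_def by auto
        moreover have "a n \<in> Field r" using a XY(1) by auto
        ultimately have False using assms(6) e unfolding prikry_matrix_def by blast }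
      thus "y \<in> Field w - (\<Union>n. A (a n) e1)" using y XY(2) by auto
    qed
    thus False using M[OF e(2)] Yu countable_subset by blast
  next
    case False
    have "Y \<subseteq> Field w - (\<Union>n. A (a n) e0)"
      using XY(2,5) a False c_def by auto
    thus False using M[OF e(1)] Yu countable_subset by blast
  qed
qed

end
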